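(* Let $H$ be an $r$-cross-free hypergraph on $V=[n]$, and let $\emptyset$ be the hypergraph on $V$ with no hyperedges. Then $$|H\setminus \mathrm{cl}_r(\emptyset)|\le|\mathrm{cl}_r(H)\setminus\mathrm{cl}_r(\emptyset)|\le 2\,|H\setminus\mathrm{cl}_r(\emptyset)|.$$
   Context: Hypergraphs on $V$ are identified with their hyperedge sets; set differences and cardinalities are of hyperedge sets. $\mathcal K_r(n)$ is the class of hypergraphs $\mathcal E$ on $V$ satisfying: (R0) every $X\subseteq V$ with $|X|\le r$ is in $\mathcal E$; (R1) $A\in\mathcal E\Rightarrow V\setminus A\in\mathcal E$; (R2) $A,B\in\mathcal E$ and $|A\cap B|\ge r\Rightarrow A\cup B\in\mathcal E$. $\mathcal K^0_r(n)$ is the class satisfying (R0) and (R1) only. $\mathrm{cl}_r(H)$ (resp. $\mathrm{cl}^0_r(H)$) is the intersection of all hypergraphs in $\mathcal K_r(n)$ (resp. $\mathcal K^0_r(n)$) containing $H$. $A,B\subseteq V$ are $r$-orthogonal if $\mathrm{cl}_r(\{A,B\})=\mathrm{cl}^0_r(\{A,B\})$. $H$ is $r$-cross-free if every pair of its hyperedges is $r$-orthogonal. *)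

theory Defs
  imports Main
begin

definition ground :: "nat \<Rightarrow> nat set" where
  "ground n = {1..n}"

definition K0 :: "nat \<Rightarrow> nat \<Rightarrow> nat set set set" where
  "K0 r n = {E. E \<subseteq> Pow (ground n)
     \<and> (\<forall>X. X \<subseteq> ground n \<and> card X \<le> r \<longrightarrow> X \<in> E)
     \<and> (\<forall>A\<in>E. ground n - A \<in> E)}"

definition K :: "nat \<Rightarrow> nat \<Rightarrow> nat set set set" where
  "K r n = {E. E \<in> K0 r n
     \<and> (\<forall>A\<in>E. \<forall>B\<in>E. card (A \<inter> B) \<ge> r \<longrightarrow> A \<union> B \<in> E)}"

definition cl :: "nat \<Rightarrow> nat \<Rightarrow> nat set set \<Rightarrow> nat set set" where
  "cl r n H = \<Inter> {E. E \<in> K r n \<and> H \<subseteq> E}"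

definition cl0 :: "nat \<Rightarrow> nat \<Rightarrow> nat set set \<Rightarrow> nat set set" where
  "cl0 r n H = \<Inter> {E. E \<in> K0 r n \<and> H \<subseteq> E}"

definition orthogonal :: "nat \<Rightarrow> nat \<Rightarrow> nat set \<Rightarrow> nat set \<Rightarrow> bool" where
  "orthogonal r n A B \<longleftrightarrow> cl r n {A, B} = cl0 r n {A, B}"

definition cross_free :: "nat \<Rightarrow> nat \<Rightarrow> nat set set \<Rightarrow> bool" where
  "cross_free r n H \<longleftrightarrow> (\<forall>A\<in>H. \<forall>B\<in>H. A \<noteq> B \<longrightarrow> orthogonal r n A B)"

end

theory Submission
  imports Defs
begin

definition SL :: "nat \<Rightarrow> nat \<Rightarrow> nat set set" where
  "SL r n = {X. X \<subseteq> ground n \<and> (card X \<le> r \<or> card (ground n - X) \<le> r)}"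

definition EP :: "nat \<Rightarrow> nat \<Rightarrow> nat set \<Rightarrow> nat set \<Rightarrow> nat set set" where
  "EP r n A B = SL r n \<union> {A, B, ground n - A, ground n - B}"

lemma fin_ground[simp]: "finite (ground n)" by (simp add: ground_def)

lemma SL_compl: "X \<in> SL r n \<Longrightarrow> ground n - X \<in> SL r n"
  unfolding SL_def by (auto simp: double_diff)

lemma K0_SL: "E \<in> K0 r n \<Longrightarrow> SL r n \<subseteq> E"
proof
  fix X assume E: "E \<in> K0 r n" and X: "X \<in> SL r n"
  show "X \<in> E"
  proof (cases "card X \<le> r")
    case True thus ?thesis using E X unfolding K0_def SL_def by auto
  next
    case False
    hence "card (ground n - X) \<le> r" "X \<subseteq> ground n" using X unfolding SL_def by auto
    hence "ground n - X \<in> E" using E unfolding K0_def by auto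
    hence "ground n - (ground n - X) \<in> E" using E unfolding K0_def by auto
    thus ?thesis using \<open>X \<subseteq> ground n\<close> by (simp add: double_diff)
  qed
qed

lemma EP_K0: "A \<subseteq> ground n \<Longrightarrow> B \<subseteq> ground n \<Longrightarrow> EP r n A B \<in> K0 r n"
  unfolding K0_def EP_def
  using SL_compl[of _ r n] by (auto simp: SL_def double_diff)

lemma cl0_sub: "A \<subseteq> ground n \<Longrightarrow> B \<subseteq> ground n \<Longrightarrow> cl0 r n {A,B} \<subseteq> EP r n A B"
  unfolding cl0_def using EP_K0[of A n B r] by (intro Inter_lower) (auto simp: EP_def)

lemma EP_sub_cl: "EP r n A B \<subseteq> cl r n {A,B}"
proof
  fix X assume X: "X \<in> EP r n A B"
  show "X \<in> cl r n {A,B}" unfolding cl_def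
  proof
    fix E assume "E \<in> {E. E \<in> K r n \<and> {A, B} \<subseteq> E}"
    hence E: "E \<in> K0 r n" "A \<in> E" "B \<in> E" unfolding K_def by auto
    hence "ground n - A \<in> E" "ground n - B \<in> E" unfolding K0_def by auto
    thus "X \<in> E" using X E K0_SL[OF E(1)] unfolding EP_def by auto
  qed
qed

lemma union_cl: "X \<in> cl r n P \<Longrightarrow> Y \<in> cl r n P \<Longrightarrow> r \<le> card (X \<inter> Y) \<Longrightarrow> X \<union> Y \<in> cl r n P"
  unfolding cl_def K_def by auto

lemma pair_closed:
  assumes "A \<subseteq> ground n" "B \<subseteq> ground n" "orthogonal r n A B"
    "X \<in> EP r n A B" "Y \<in> EP r n A B" "r \<le> card (X \<inter> Y)"
  shows "X \<union> Y \<in> EP r n A B"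
proof -
  have "X \<union> Y \<in> cl r n {A,B}" using union_cl EP_sub_cl assms by blast
  thus ?thesis using assms cl0_sub unfolding orthogonal_def by blast
qed

lemma single_closed:
  assumes A: "A \<subseteq> ground n"
    and X: "X \<in> EP r n A A" and Y: "Y \<in> EP r n A A" and c: "r \<le> card (X \<inter> Y)"
  shows "X \<union> Y \<in> EP r n A A"
proof -
  have XV: "X \<subseteq> ground n" and YV: "Y \<subseteq> ground n" using X Y A unfolding EP_def SL_def by auto
  have small: "Z \<subseteq> W" if "Z \<subseteq> ground n" "card Z \<le> r" "r \<le> card (W \<inter> Z)" for Z W
  proof -
    have "finite Z" using finite_subset[OF that(1)] by simp
    have "card Z \<le> card (W \<inter> Z)" using that by linarith
    hence "W \<inter> Z = Z" using card_seteq[OF \<open>finite Z\<close>, of "W \<inter> Z"] by auto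
    thus ?thesis by auto
  qed
  have large: "Z \<union> W \<in> SL r n" if "W \<subseteq> ground n" "card (ground n - W) \<le> r" "Z \<subseteq> ground n" for Z W
  proof -
    have "card (ground n - (Z \<union> W)) \<le> card (ground n - W)"
      by (rule card_mono) auto
    thus ?thesis using that unfolding SL_def by auto
  qed
  show ?thesis
  proof (cases "X = Y")
    case True thus ?thesis using X by simp
  next
    case neq: False
    show ?thesis
    proof (cases "Y \<in> SL r n")
      case True
      then consider "card Y \<le> r" | "card (ground n - Y) \<le> r" unfolding SL_def by auto
      thus ?thesis
      proof cases
        case 1 hence "Y \<subseteq> X" using small[OF YV 1, of X] c by auto
        hence "X \<union> Y = X" by auto
        thus ?thesis using X by simp
      next
        case 2 thus ?thesis using large[OF YV 2 XV] unfolding EP_def by auto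
      qed
    next
      case YN: False
      show ?thesis
      proof (cases "X \<in> SL r n")
        case True
        then consider "card X \<le> r" | "card (ground n - X) \<le> r" unfolding SL_def by auto
        thus ?thesis
        proof cases
          case 1 hence "X \<subseteq> Y" using small[OF XV 1, of Y] c by (auto simp: Int_commute)
          hence "X \<union> Y = Y" by auto
          thus ?thesis using Y by simp
        next
          case 2 thus ?thesis using large[OF XV 2 YV] unfolding EP_def by (auto simp: Un_commute)
        qed
      next
        case XN: False
        have "X \<in> {A, ground n - A}" "Y \<in> {A, ground n - A}" using X Y XN YN unfolding EP_def by auto
        hence "X \<inter> Y = {}" "X \<union> Y = ground n" using neq A by auto
        hence "X \<union> Y \<in> SL r n" unfolding SL_def by auto
        thus ?thesis unfolding EP_def by auto
      qed
    qed
  qed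
qed

lemma SL_EP: "EP r n {} {} = SL r n"
  unfolding EP_def SL_def by auto

lemma SL_K: "SL r n \<in> K r n"
proof -
  have "SL r n \<in> K0 r n" using EP_K0[of "{}" n "{}" r] SL_EP by simp
  moreover have "\<forall>X\<in>SL r n. \<forall>Y\<in>SL r n. r \<le> card (X \<inter> Y) \<longrightarrow> X \<union> Y \<in> SL r n"
    using single_closed[of "{}" n _ r] SL_EP by simp
  ultimately show ?thesis unfolding K_def by auto
qed

lemma cl_empty: "cl r n {} = SL r n"
proof
  show "cl r n {} \<subseteq> SL r n" unfolding cl_def using SL_K by (intro Inter_lower) auto
  show "SL r n \<subseteq> cl r n {}" unfolding cl_def K_def using K0_SL by auto
qed

definition EH :: "nat \<Rightarrow> nat \<Rightarrow> nat set set \<Rightarrow> nat set set" where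
  "EH r n H = SL r n \<union> H \<union> (\<lambda>A. ground n - A) ` H"

lemma EH_K:
  assumes HV: "H \<subseteq> Pow (ground n)" and cf: "cross_free r n H"
  shows "EH r n H \<in> K r n"
proof -
  have K0: "EH r n H \<in> K0 r n"
    unfolding K0_def EH_def using HV SL_compl[of _ r n]
    by (auto simp: SL_def double_diff)
  have getA: "\<exists>A. (A \<in> H \<or> A = {}) \<and> X \<in> EP r n A A" if "X \<in> EH r n H" for X
    using that unfolding EH_def EP_def by auto
  have EPsub: "EP r n A B \<subseteq> EH r n H" if "A \<in> H \<or> A = {}" "B \<in> H \<or> B = {}" for A B
    using that unfolding EP_def EH_def SL_def by auto
  have "X \<union> Y \<in> EH r n H" if X: "X \<in> EH r n H" and Y: "Y \<in> EH r n H" and c: "r \<le> card (X \<inter> Y)" for X Y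
  proof -
    obtain A where A: "A \<in> H \<or> A = {}" "X \<in> EP r n A A" using getA[OF X] by blast
    obtain B where B: "B \<in> H \<or> B = {}" "Y \<in> EP r n B B" using getA[OF Y] by blast
    have AV: "A \<subseteq> ground n" "B \<subseteq> ground n" using A(1) B(1) HV by auto
    have XA: "X \<in> EP r n A B" "Y \<in> EP r n A B" using A B unfolding EP_def by auto
    show ?thesis
    proof (cases "A = B")
      case True
      thus ?thesis using single_closed[OF AV(1) A(2)] B(2) c EPsub[OF A(1) A(1)] by auto
    next
      case False
      show ?thesis
      proof (cases "A = {}")
        case True
        have "EP r n A B = EP r n B B" using True unfolding EP_def SL_def by auto
        thus ?thesis using single_closed[OF AV(2), of X r Y] XA c EPsub[OF B(1) B(1)] by auto
      next
        case nA: False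
        show ?thesis
        proof (cases "B = {}")
          case True
          have "EP r n A B = EP r n A A" using True unfolding EP_def SL_def by auto
          thus ?thesis using single_closed[OF AV(1), of X r Y] XA c EPsub[OF A(1) A(1)] by auto
        next
          case nB: False
          have o: "orthogonal r n A B" using cf A(1) B(1) nA nB False unfolding cross_free_def by auto
          show ?thesis using pair_closed[OF AV o XA c] EPsub[OF A(1) B(1)] by auto
        qed
      qed
    qed
  qed
  thus ?thesis using K0 unfolding K_def by auto
qed

theorem mainTheorem17:
  fixes r n :: nat and H :: "nat set set"
  assumes "H \<subseteq> Pow (ground n)"
    and "cross_free r n H"
  shows "card (H - cl r n {}) \<le> card (cl r n H - cl r n {})
    \<and> card (cl r n H - cl r n {}) \<le> 2 * card (H - cl r n {})"
proof -
  have finP: "finite (Pow (ground n))" by simp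
  have PK: "Pow (ground n) \<in> K r n" unfolding K_def K0_def by auto
  have Hcl: "H \<subseteq> cl r n H" unfolding cl_def by auto
  have clE: "cl r n H \<subseteq> EH r n H" unfolding cl_def using EH_K[OF assms] by (intro Inter_lower) (auto simp: EH_def)
  have clP: "cl r n H \<subseteq> Pow (ground n)" unfolding cl_def using PK assms(1) by (intro Inter_lower) auto
  have f1: "finite (cl r n H - cl r n {})" using clP finite_subset[OF _ finP] by blast
  have f2: "finite (H - cl r n {})" using assms(1) finite_subset[OF _ finP] by blast
  have part1: "card (H - cl r n {}) \<le> card (cl r n H - cl r n {})"
    using Hcl f1 by (intro card_mono) auto
  let ?H' = "H - SL r n"
  have "cl r n H - cl r n {} \<subseteq> ?H' \<union> (\<lambda>A. ground n - A) ` ?H'"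
  proof
    fix X assume X: "X \<in> cl r n H - cl r n {}"
    hence XS: "X \<notin> SL r n" "X \<in> EH r n H" using cl_empty clE by auto
    show "X \<in> ?H' \<union> (\<lambda>A. ground n - A) ` ?H'"
    proof (cases "X \<in> H")
      case True thus ?thesis using XS by auto
    next
      case False
      then obtain A where A: "A \<in> H" "X = ground n - A" using XS unfolding EH_def by auto
      have "A \<notin> SL r n"
      proof
        assume "A \<in> SL r n" hence "X \<in> SL r n" using A SL_compl by auto
        thus False using XS by auto
      qed
      thus ?thesis using A by auto
    qed
  qed
  hence "card (cl r n H - cl r n {}) \<le> card (?H' \<union> (\<lambda>A. ground n - A) ` ?H')"
    using f2 cl_empty by (intro card_mono) auto
  also have "\<dots> \<le> card ?H' + card ((\<lambda>A. ground n - A) ` ?H')" by (rule card_Un_le)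
  also have "\<dots> \<le> 2 * card ?H'" using card_image_le[of ?H' "\<lambda>A. ground n - A"] f2 cl_empty by auto
  finally show ?thesis using part1 cl_empty by auto
qed

end
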